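(* Let $R$ be a finite commutative ring with identity, and let $f=\frac{1}{1-X}=\sum_{k\ge 0}X^k\in R[[X]]$. Then the $\omega$-sequential function $\mu[f]:R[[X]]\to R[[X]],\ g\mapsto fg$ is finite state, and its set of remainders is $Q_{\mu[f]}=\{\,g\mapsto f\cdot(s+g)\ \mid\ s\in R\,\}$.
   Context: Identify $R^\omega$ (infinite words over the alphabet $R$) with $R[[X]]$ via $(a_0,a_1,\dots)\mapsto\sum_k a_kX^k$. For infinite words $x$, $x[0,n]$ denotes its prefix of length $n$. A map $\zeta:A^\omega\to B^\omega$ is $\omega$-sequential if whenever a finite word $u$ is a common prefix of $x$ and $y$, then $\zeta(x)[0,|u|]=\zeta(y)[0,|u|]$. For such $\zeta$ and a finite word $u$, write $\zeta(ux)=\epsilon(u)\zeta_u(x)$ for all $x\in A^\omega$, where $\epsilon(u)=\zeta(ux)[0,|u|]$ (independent of $x$) and $\zeta_u:A^\omega\to B^\omega$; $\zeta_u$ is the remainder of $\zeta$ for $u$. The set of remainders is $Q_\zeta=\{\zeta_u\mid u\in A^*\}$, and $\zeta$ is called finite state if $Q_\zeta$ is finite. *)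

theory Defs
  imports "HOL-Computational_Algebra.Formal_Power_Series"
begin

text \<open>Infinite words over R are identified with formal power series R[[X]]
  via (a_0,a_1,...) corresponds to sum a_k X^k, i.e. the k-th letter is the k-th coefficient.
  Finite words are lists.\<close>

definition prefix_of :: "'a fps \<Rightarrow> nat \<Rightarrow> 'a list" where
  "prefix_of x n = map (fps_nth x) [0..<n]"

definition conc :: "'a list \<Rightarrow> 'a fps \<Rightarrow> 'a fps" where
  "conc u x = Abs_fps (\<lambda>n. if n < length u then u ! n else fps_nth x (n - length u))"

definition omega_sequential :: "('a fps \<Rightarrow> 'b fps) \<Rightarrow> bool" where
  "omega_sequential \<zeta> \<longleftrightarrow>
     (\<forall>u x y. prefix_of (\<zeta> (conc u x)) (length u) = prefix_of (\<zeta> (conc u y)) (length u))"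

text \<open>The remainder zeta_u: zeta(u x) = eps(u) zeta_u(x), so zeta_u(x) is zeta(u x) with its
  first |u| letters removed.\<close>
definition remainder :: "('a fps \<Rightarrow> 'b fps) \<Rightarrow> 'a list \<Rightarrow> 'a fps \<Rightarrow> 'b fps" where
  "remainder \<zeta> u = (\<lambda>x. Abs_fps (\<lambda>n. fps_nth (\<zeta> (conc u x)) (n + length u)))"

definition remainders :: "('a fps \<Rightarrow> 'b fps) \<Rightarrow> ('a fps \<Rightarrow> 'b fps) set" where
  "remainders \<zeta> = {remainder \<zeta> u | u. True}"

definition finite_state :: "('a fps \<Rightarrow> 'b fps) \<Rightarrow> bool" where
  "finite_state \<zeta> \<longleftrightarrow> finite (remainders \<zeta>)"

end

theory Submission
  imports Defs
begin

unbundle fps_syntax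

lemma onemul_nth:
  fixes g :: "'a::comm_ring_1 fps"
  shows
  "(Abs_fps (\<lambda>k. 1) * g) $ n = (\<Sum>k\<le>n. g $ k)"
proof -
  have "(Abs_fps (\<lambda>k. 1) * g) $ n = (\<Sum>i\<in>{0..n}. g $ (n - i))"
    by (simp add: fps_mult_nth)
  also have "\<dots> = (\<Sum>k\<le>n. g $ k)"
    by (rule sum.reindex_bij_witness[of _ "\<lambda>i. n-i" "\<lambda>i. n-i"]) auto
  finally show ?thesis .
qed

lemma conc_nth: "conc u x $ k = (if k < length u then u ! k else x $ (k - length u))"
  by (simp add: conc_def)

lemma sum_conc:
  "(\<Sum>k\<le>n + length u. conc u x $ k) = sum_list u + (\<Sum>j\<le>n. x $ j)"
proof -
  let ?m = "length u"
  have split: "{..n + ?m} = {..<?m} \<union> {?m..n + ?m}" by auto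
  have "(\<Sum>k\<le>n + ?m. conc u x $ k) = (\<Sum>k<?m. conc u x $ k) + (\<Sum>k\<in>{?m..n + ?m}. conc u x $ k)"
    unfolding split by (rule sum.union_disjoint) auto
  also have "(\<Sum>k<?m. conc u x $ k) = (\<Sum>k<?m. u ! k)"
    by (rule sum.cong) (auto simp: conc_nth)
  also have "\<dots> = sum_list u" by (simp add: sum_list_sum_nth atLeast0LessThan)
  also have "(\<Sum>k\<in>{?m..n + ?m}. conc u x $ k) = (\<Sum>k\<in>{0 + ?m..n + ?m}. conc u x $ k)" by simp
  also have "\<dots> = (\<Sum>j\<in>{0..n}. conc u x $ (j + ?m))" by (rule sum.shift_bounds_cl_nat_ivl)
  also have "\<dots> = (\<Sum>j\<le>n. x $ j)" by (simp add: conc_nth atLeast0AtMost)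
  finally show ?thesis .
qed

lemma rem_eq:
  fixes f :: "'r::comm_ring_1 fps"
  assumes f_def: "f = Abs_fps (\<lambda>k. 1)"
  shows "remainder (\<lambda>g. f * g) u = (\<lambda>g. f * (fps_const (sum_list u) + g))"
proof (rule ext, rule fps_ext)
  fix x n
  have "(\<Sum>k\<le>n. (fps_const (sum_list u) + x) $ k) = (\<Sum>k\<le>n. fps_const (sum_list u) $ k) + (\<Sum>k\<le>n. x $ k)"
    by (simp add: sum.distrib)
  also have "(\<Sum>k\<le>n. fps_const (sum_list u) $ k) = sum_list u"
    by (simp add: fps_nth_fps_const)
  finally show "remainder (\<lambda>g. f * g) u x $ n = (f * (fps_const (sum_list u) + x)) $ n"
    by (simp add: remainder_def f_def onemul_nth sum_conc)
qed

theorem theorem7p14: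
  fixes f :: "'r::{comm_ring_1, finite} fps"
  assumes f_def: "f = Abs_fps (\<lambda>k. 1)"
  shows "omega_sequential (\<lambda>g. f * g)
       \<and> finite_state (\<lambda>g. f * g)
       \<and> remainders (\<lambda>g. f * g) = {(\<lambda>g. f * (fps_const s + g)) | s. True}"
proof -
  have os: "omega_sequential (\<lambda>g. f * g)"
    unfolding omega_sequential_def prefix_of_def
  proof (intro allI)
    fix u and x y :: "'r fps"
    have "(f * conc u x) $ n = (f * conc u y) $ n" if "n < length u" for n
      using that by (simp add: f_def onemul_nth conc_nth)
    then show "map (($) (f * conc u x)) [0..<length u] = map (($) (f * conc u y)) [0..<length u]"
      by simp
  qed
  have R: "remainders (\<lambda>g. f * g) = {(\<lambda>g. f * (fps_const s + g)) | s. True}"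
  proof
    show "remainders (\<lambda>g. f * g) \<subseteq> {(\<lambda>g. f * (fps_const s + g)) | s. True}"
      unfolding remainders_def using rem_eq[OF f_def] by auto
  next
    show "{(\<lambda>g. f * (fps_const s + g)) | s. True} \<subseteq> remainders (\<lambda>g. f * g)"
    proof
      fix h assume "h \<in> {(\<lambda>g. f * (fps_const s + g)) | s. True}"
      then obtain s where "h = (\<lambda>g. f * (fps_const s + g))" by auto
      then have "h = remainder (\<lambda>g. f * g) [s]" using rem_eq[OF f_def, of "[s]"] by simp
      then show "h \<in> remainders (\<lambda>g. f * g)" unfolding remainders_def by auto
    qed
  qed
  have "{(\<lambda>g. f * (fps_const s + g)) | s. True} = (\<lambda>s. (\<lambda>g. f * (fps_const s + g))) ` UNIV"
    by auto
  then have "finite_state (\<lambda>g. f * g)" unfolding finite_state_def R by simp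
  with os R show ?thesis by simp
qed

end
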